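(* Let $f:\mathbb R^d\to[0,\infty)$ satisfy the hydrodynamic bounds, let $q>d+\gamma+2s$, $N>0$, $g(v)=N\min(1,|v|^{-q})$, and assume $f\le g$ on $\mathbb R^d$. Then for all $|v|\ge2$, $$\mathcal B_{3,q}(f,f)(v)\lesssim (1+q)^2\Big((1+q)^{q-(d-1)}+\frac1{q-(d+\gamma+2s)}\Big)|v|^{\gamma-2}g(v).$$
   Context: Fix $d\ge2$, $s\in(0,1)$, $\gamma\in\mathbb R$ with $\gamma+2s\in[0,2]$, and $\tilde b$ smooth with $0<\tilde b_0\le\tilde b\le\tilde b_1$. Hydrodynamic bounds: $m_0\le\int f\le M_0$, $\int f|v|^2\le E_0$, $\int f\ln f\le H_0$. $A\lesssim B$ means $A\le CB$ with $C$ depending only on $d,\gamma,s,\tilde b_0,\tilde b_1,m_0,M_0,E_0,H_0$. Let $c_1(q)=\frac1{20q}$ and $c_3(q)=\frac1{2(1+q)}$. For $v,v',v'_*$ with $(v'-v)\perp(v'_*-v)$ set $v_*=v'+v'_*-v$ and let $\theta$ be the angle between $v-v_*$ and $v'-v'_*$. Define $$\mathcal B_{3,q}(f_1,f_2)(v)=\int_{c_3(q)|v|\le|v'|<|v|/2}\frac{f_2(v')-f_2(v)}{|v'-v|^{d+2s}}\int_{v'_*\in v+(v-v')^\perp,\ |v'_*|\ge c_1(q)|v|}f_1(v'_* )|v-v'_*|^{\gamma+2s+1}\tilde b(\cos\theta)\,dv'_*\,dv',$$ the inner integral over the affine hyperplane through $v$ orthogonal to $v-v'$ with $(d-1)$-dimensional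 Lebesgue measure. *)

theory Defs
  imports "HOL-Analysis.Analysis"
begin

definition smooth_on_interval :: "(real \<Rightarrow> real) \<Rightarrow> bool" where
  "smooth_on_interval b \<longleftrightarrow>
     (\<exists>D :: nat \<Rightarrow> real \<Rightarrow> real. D 0 = b \<and>
        (\<forall>n. \<forall>x\<in>{-1..1}. (D n has_real_derivative D (Suc n) x) (at x within {-1..1})))"

definition c1 :: "real \<Rightarrow> real" where "c1 q = 1 / (20 * q)"
definition c3 :: "real \<Rightarrow> real" where "c3 q = 1 / (2 * (1 + q))"

text \<open>Integral over the affine hyperplane through p orthogonal to u (u nonzero) with respect to
  (d-1)-dimensional Lebesgue measure.  With n the unit normal, Fubini gives
  integral over H of F = integral over the slab 0 <= x.n <= 1 of F(p + orthogonal projection of x).\<close>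
definition hyperplane_integral :: "'a::euclidean_space \<Rightarrow> 'a \<Rightarrow> ('a \<Rightarrow> real) \<Rightarrow> real" where
  "hyperplane_integral p u F =
     (let n = u /\<^sub>R norm u in
      LINT x : {x. 0 \<le> x \<bullet> n \<and> x \<bullet> n \<le> 1} | lborel. F (p + (x - (x \<bullet> n) *\<^sub>R n)))"

definition cos_theta :: "'a::euclidean_space \<Rightarrow> 'a \<Rightarrow> 'a \<Rightarrow> real" where
  "cos_theta v v' v's =
     (let vs = v' + v's - v in
      ((v - vs) \<bullet> (v' - v's)) / (norm (v - vs) * norm (v' - v's)))"

definition B3 :: "real \<Rightarrow> real \<Rightarrow> (real \<Rightarrow> real) \<Rightarrow> real \<Rightarrow>
                   ('a::euclidean_space \<Rightarrow> real) \<Rightarrow> ('a \<Rightarrow> real) \<Rightarrow> 'a \<Rightarrow> real" where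
  "B3 \<gamma> s b q f1 f2 v =
     (LINT v' : {v'. c3 q * norm v \<le> norm v' \<and> norm v' < norm v / 2} | lborel.
        (f2 v' - f2 v) / norm (v' - v) powr (real DIM('a) + 2 * s) *
        hyperplane_integral v (v - v')
          (\<lambda>v's. if c1 q * norm v \<le> norm v's
                 then f1 v's * norm (v - v's) powr (\<gamma> + 2 * s + 1) * b (cos_theta v v' v's)
                 else 0))"

definition hydro_bounds :: "real \<Rightarrow> real \<Rightarrow> real \<Rightarrow> real \<Rightarrow> ('a::euclidean_space \<Rightarrow> real) \<Rightarrow> bool" where
  "hydro_bounds m0 M0 E0 H0 f \<longleftrightarrow>
     f \<in> borel_measurable lborel \<and> (\<forall>v. 0 \<le> f v) \<and>
     integrable lborel f \<and> m0 \<le> (\<integral>v. f v \<partial>lborel) \<and> (\<integral>v. f v \<partial>lborel) \<le> M0 \<and>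
     integrable lborel (\<lambda>v. f v * (norm v)\<^sup>2) \<and> (\<integral>v. f v * (norm v)\<^sup>2 \<partial>lborel) \<le> E0 \<and>
     integrable lborel (\<lambda>v. f v * ln (f v)) \<and> (\<integral>v. f v * ln (f v) \<partial>lborel) \<le> H0"

definition gq :: "real \<Rightarrow> real \<Rightarrow> 'a::real_normed_vector \<Rightarrow> real" where
  "gq N q v = N * (if norm v \<le> 1 then 1 else norm v powr (- q))"

end

theory Submission
  imports Defs
begin

lemma integral_le_nn_bound:
  fixes f g :: "'b \<Rightarrow> real"
  assumes le: "\<And>x. f x \<le> g x" and g0: "\<And>x. 0 \<le> g x"
    and nn: "(\<integral>\<^sup>+x. ennreal (g x) \<partial>M) \<le> ennreal B" and B0: "0 \<le> B"
  shows "integral\<^sup>L M f \<le> B"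
proof (cases "integrable M f")
  case False then show ?thesis using B0 by (simp add: not_integrable_integral_eq)
next
  case True
  have "integral\<^sup>L M f \<le> integral\<^sup>L M (\<lambda>x. max (f x) 0)"
    by (intro integral_mono) (auto simp: True)
  also have "\<dots> = enn2real (\<integral>\<^sup>+x. ennreal (max (f x) 0) \<partial>M)"
    using True by (intro integral_eq_nn_integral) auto
  also have "\<dots> \<le> B"
  proof -
    have "(\<integral>\<^sup>+x. ennreal (max (f x) 0) \<partial>M) \<le> (\<integral>\<^sup>+x. ennreal (g x) \<partial>M)"
      by (intro nn_integral_mono ennreal_leI) (use le g0 in auto)
    also note nn
    finally show ?thesis using B0 by (intro enn2real_leI)
  qed
  finally show ?thesis .
qed


lemma cyl_measure:
  fixes n v :: "'a::euclidean_space" and R :: real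
  assumes n: "norm n = 1" and R: "R \<ge> 2/3"
  shows "emeasure lborel {x. 0 \<le> x \<bullet> n \<and> x \<bullet> n \<le> 1 \<and> norm (v + (x - (x \<bullet> n) *\<^sub>R n)) \<le> R}
           \<le> ennreal (12 ^ DIM('a) * R powr (real DIM('a) - 1))"
proof -
  define Cyl where "Cyl t = {x. t \<le> x \<bullet> n \<and> x \<bullet> n \<le> t + 1 \<and> norm (v + (x - (x \<bullet> n) *\<^sub>R n)) \<le> R}" for t :: real
  have nn: "n \<bullet> n = 1" using n by (simp add: dot_square_norm)
  have meas: "Cyl t \<in> sets lborel" for t
    unfolding Cyl_def by measurable
  have pre: "Cyl t = ((+) (- (t *\<^sub>R n))) -` Cyl 0 \<inter> space lborel" for t
  proof -
    have "(x - t *\<^sub>R n) - ((x - t *\<^sub>R n) \<bullet> n) *\<^sub>R n = x - (x \<bullet> n) *\<^sub>R n" for x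
      by (simp add: inner_diff_left nn algebra_simps)
    then show ?thesis unfolding Cyl_def
      by (auto simp: inner_diff_left nn algebra_simps)
  qed
  have trans: "emeasure lborel (Cyl t) = emeasure lborel (Cyl 0)" for t
  proof -
    have "emeasure lborel (Cyl 0) = emeasure (distr lborel borel ((+) (- (t *\<^sub>R n)))) (Cyl 0)"
      by (simp add: lborel_distr_plus)
    also have "\<dots> = emeasure lborel (((+) (- (t *\<^sub>R n))) -` Cyl 0 \<inter> space lborel)"
      using meas by (intro emeasure_distr) auto
    finally show ?thesis using pre[of t] by metis
  qed
  define K where "K = nat \<lceil>R\<rceil>"
  have RK: "R \<le> real K" "real K \<le> R + 1" using R unfolding K_def by linarith+
  define r where "r = R + 2 * real K"
  have sumeq: "(\<Sum>k<K. emeasure lborel (Cyl (2 * real k))) = emeasure lborel (\<Union>k<K. Cyl (2 * real k))"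
  proof (rule sum_emeasure)
    show "(\<lambda>k. Cyl (2 * real k)) ` {..<K} \<subseteq> sets lborel" using meas by auto
    show "disjoint_family_on (\<lambda>k. Cyl (2 * real k)) {..<K}"
      unfolding disjoint_family_on_def Cyl_def
    proof (intro ballI impI, safe)
      fix i j x assume "i \<noteq> j" and h: "2 * real i \<le> x \<bullet> n" "x \<bullet> n \<le> 2 * real i + 1"
        "2 * real j \<le> x \<bullet> n" "x \<bullet> n \<le> 2 * real j + 1"
      then have "i < j \<or> j < i" by linarith
      then show "x \<in> {}"
      proof
        assume "i < j" then have "real i + 1 \<le> real j" by simp
        then show ?thesis using h by linarith
      next
        assume "j < i" then have "real j + 1 \<le> real i" by simp
        then show ?thesis using h by linarith
      qed
    qed
  qed simp
  have sub: "(\<Union>k<K. Cyl (2 * real k)) \<subseteq> cbox (- v - r *\<^sub>R One) (- v + r *\<^sub>R One)"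
  proof
    fix x assume "x \<in> (\<Union>k<K. Cyl (2 * real k))"
    then obtain k where k: "k < K" and x: "x \<in> Cyl (2 * real k)" by auto
    have kK: "2 * real k + 1 \<le> 2 * real K" using k by simp
    have "norm (v + x) = norm ((v + (x - (x \<bullet> n) *\<^sub>R n)) + (x \<bullet> n) *\<^sub>R n)" by simp
    also have "\<dots> \<le> norm (v + (x - (x \<bullet> n) *\<^sub>R n)) + norm ((x \<bullet> n) *\<^sub>R n)" by (rule norm_triangle_ineq)
    also have "\<dots> \<le> R + 2 * real K" using x kK n unfolding Cyl_def by auto
    finally have nx: "norm (x + v) \<le> r" unfolding r_def by (simp add: add.commute)
    show "x \<in> cbox (- v - r *\<^sub>R One) (- v + r *\<^sub>R One)"
      unfolding mem_box
    proof (intro ballI conjI)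
      fix b :: 'a assume b: "b \<in> Basis"
      have "\<bar>(x + v) \<bullet> b\<bar> \<le> r" using Basis_le_norm[OF b, of "x + v"] nx by linarith
      then show "(- v - r *\<^sub>R One) \<bullet> b \<le> x \<bullet> b" "x \<bullet> b \<le> (- v + r *\<^sub>R One) \<bullet> b"
        using b by (auto simp: inner_diff_left inner_add_left)
    qed
  qed
  have r0: "0 \<le> r" using RK R unfolding r_def by linarith
  have box: "emeasure lborel (cbox (- v - r *\<^sub>R One) (- v + r *\<^sub>R One)) = ennreal ((2 * r) ^ DIM('a))"
  proof -
    have "\<forall>b\<in>Basis. (- v - r *\<^sub>R One) \<bullet> b \<le> (- v + r *\<^sub>R One) \<bullet> b"
      using r0 by (auto simp: inner_diff_left inner_add_left)
    moreover have "(\<Prod>b\<in>Basis. ((- v + r *\<^sub>R One) - (- v - r *\<^sub>R One)) \<bullet> (b::'a)) = (2 * r) ^ DIM('a)"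
      by (simp add: inner_add_left inner_diff_left)
    ultimately show ?thesis by (simp add: emeasure_lborel_cbox_eq)
  qed
  have "(\<Sum>k<K. emeasure lborel (Cyl (2 * real k))) = (\<Sum>k<K. emeasure lborel (Cyl 0))"
    by (intro sum.cong refl trans)
  then have "ennreal (real K) * emeasure lborel (Cyl 0) = (\<Sum>k<K. emeasure lborel (Cyl (2 * real k)))"
    by (simp add: ennreal_of_nat_eq_real_of_nat)
  also have "\<dots> \<le> ennreal ((2 * r) ^ DIM('a))"
    unfolding sumeq box[symmetric] by (rule emeasure_mono[OF sub]) simp
  finally have main: "ennreal (real K) * emeasure lborel (Cyl 0) \<le> ennreal ((2 * r) ^ DIM('a))" .
  have Kpos: "0 < real K" using RK R by linarith
  have bound: "(2 * r) ^ DIM('a) / real K \<le> 12 ^ DIM('a) * R powr (real DIM('a) - 1)"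
  proof -
    have "2 \<le> 3 * R" using R by simp
    then have "2 * r \<le> 12 * R" using RK unfolding r_def by argo
    then have "(2 * r) ^ DIM('a) \<le> (12 * R) ^ DIM('a)" using r0 by (intro power_mono) auto
    then have "(2 * r) ^ DIM('a) / real K \<le> (12 * R) ^ DIM('a) / R"
      using RK R Kpos by (intro frac_le) auto
    also have "\<dots> = 12 ^ DIM('a) * R powr (real DIM('a) - 1)"
      using R by (simp add: powr_diff powr_realpow power_mult_distrib)
    finally show ?thesis .
  qed
  have "emeasure lborel (Cyl 0) \<le> ennreal ((2 * r) ^ DIM('a) / real K)"
  proof (cases "emeasure lborel (Cyl 0)" rule: ennreal_cases)
    case (real m)
    with main have "ennreal (real K * m) \<le> ennreal ((2 * r) ^ DIM('a))" by (simp add: ennreal_mult)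
    then have "real K * m \<le> (2 * r) ^ DIM('a)" using r0 by (simp add: ennreal_le_iff)
    then have "m \<le> (2 * r) ^ DIM('a) / real K" using Kpos by (simp add: field_simps)
    then show ?thesis using real by (simp add: ennreal_leI)
  next
    case top
    with main Kpos have False by (simp add: ennreal_mult_top top_unique)
    then show ?thesis ..
  qed
  also have "\<dots> \<le> ennreal (12 ^ DIM('a) * R powr (real DIM('a) - 1))" by (rule ennreal_leI[OF bound])
  finally show ?thesis unfolding Cyl_def by simp
qed


lemma exists_dyadic:
  fixes h a :: real
  assumes a: "0 < a" and h: "a \<le> h"
  shows "\<exists>j::nat. h \<le> 2 ^ j * a \<and> 2 ^ j * a / 2 < h"
proof -
  obtain m :: nat where m: "h / a < 2 ^ m" using real_arch_pow[of 2 "h / a"] by auto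
  then have ex: "\<exists>j::nat. h \<le> 2 ^ j * a" using a by (intro exI[of _ m]) (simp add: field_simps)
  define j where "j = (LEAST j::nat. h \<le> 2 ^ j * a)"
  have j1: "h \<le> 2 ^ j * a" unfolding j_def by (rule LeastI_ex[OF ex])
  have j2: "2 ^ j * a / 2 < h"
  proof (cases j)
    case 0 then show ?thesis using a h by simp
  next
    case (Suc i)
    then have "i < j" by simp
    then have "\<not> h \<le> 2 ^ i * a" unfolding j_def by (rule not_less_Least)
    then show ?thesis using Suc by simp
  qed
  show ?thesis using j1 j2 by blast
qed

lemma slab_nn_bound:
  fixes n v :: "'a::euclidean_space" and a P :: real
  assumes n: "norm n = 1" and a: "a \<ge> 2/3"
    and alow: "\<And>x. a \<le> norm (v + (x - (x \<bullet> n) *\<^sub>R n))"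
    and P: "P > real DIM('a) - 1"
  shows "(\<integral>\<^sup>+x. ennreal (indicator {x. 0 \<le> x \<bullet> n \<and> x \<bullet> n \<le> 1} x *
              norm (v + (x - (x \<bullet> n) *\<^sub>R n)) powr (- P)) \<partial>lborel)
         \<le> ennreal (2 powr P * 12 ^ DIM('a) * a powr (real DIM('a) - 1 - P)
                     / (1 - 2 powr (real DIM('a) - 1 - P)))"
proof -
  define h where "h x = norm (v + (x - (x \<bullet> n) *\<^sub>R n))" for x
  define S where "S = {x. 0 \<le> x \<bullet> n \<and> x \<bullet> n \<le> 1}"
  define Cyl where "Cyl R = {x. 0 \<le> x \<bullet> n \<and> x \<bullet> n \<le> 1 \<and> h x \<le> R}" for R
  define e where "e = real DIM('a) - 1 - P"
  define \<rho> where "\<rho> = 2 powr e"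
  define c where "c j = 2 powr P * (2 ^ j * a) powr (- P)" for j :: nat
  have a0: "0 < a" using a by simp
  have "1 \<le> real DIM('a)" using DIM_positive[where 'a='a] by linarith
  then have P0: "0 \<le> P" using P by linarith
  have e0: "e < 0" using P unfolding e_def by simp
  have \<rho>1: "\<rho> < 1" "0 < \<rho>" using e0 unfolding \<rho>_def by (auto intro: powr_less_one)
  have measC: "Cyl R \<in> sets lborel" for R unfolding Cyl_def h_def by measurable
  have pw: "ennreal (indicator S x * h x powr (- P)) \<le> (\<Sum>j. ennreal (c j) * indicator (Cyl (2 ^ j * a)) x)" for x
  proof (cases "x \<in> S")
    case False then show ?thesis by simp
  next
    case True
    obtain j :: nat where j: "h x \<le> 2 ^ j * a" "2 ^ j * a / 2 < h x"
      using exists_dyadic[OF a0 alow[of x]] unfolding h_def by blast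
    have pos: "0 < 2 ^ j * a / 2" using a0 by simp
    have "h x powr (- P) \<le> (2 ^ j * a / 2) powr (- P)"
      using P0 j pos by (intro powr_mono2') auto
    also have "\<dots> = c j" unfolding c_def using a0
      by (simp add: powr_divide powr_minus_divide divide_simps)
    finally have le: "h x powr (- P) \<le> c j" .
    have "ennreal (indicator S x * h x powr (- P)) \<le> ennreal (c j) * indicator (Cyl (2 ^ j * a)) x"
      using True j le unfolding S_def Cyl_def by (auto intro: ennreal_leI)
    also have "\<dots> \<le> (\<Sum>j. ennreal (c j) * indicator (Cyl (2 ^ j * a)) x)"
    proof -
      define F where "F = (\<lambda>j. ennreal (c j) * indicator (Cyl (2 ^ j * a)) x)"
      have "sum F {j} \<le> suminf F" by (rule sum_le_suminf[OF summableI]) auto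
      then have "F j \<le> suminf F" by (metis add.right_neutral empty_iff finite.emptyI sum.empty sum.insert)
      then show ?thesis by (simp only: F_def)
    qed
    finally show ?thesis .
  qed
  have termb: "ennreal (c j) * emeasure lborel (Cyl (2 ^ j * a))
      \<le> ennreal (2 powr P * 12 ^ DIM('a) * a powr e * \<rho> ^ j)" for j :: nat
  proof -
    have R: "2 / 3 \<le> 2 ^ j * a" using a
      by (metis mult_1 mult_right_mono one_le_power order_trans a0 less_imp_le one_le_numeral)
    have "emeasure lborel (Cyl (2 ^ j * a)) \<le> ennreal (12 ^ DIM('a) * (2 ^ j * a) powr (real DIM('a) - 1))"
      unfolding Cyl_def h_def by (rule cyl_measure[OF n R])
    then have "ennreal (c j) * emeasure lborel (Cyl (2 ^ j * a))
        \<le> ennreal (c j) * ennreal (12 ^ DIM('a) * (2 ^ j * a) powr (real DIM('a) - 1))"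
      by (rule mult_left_mono) simp
    also have "\<dots> = ennreal (c j * (12 ^ DIM('a) * (2 ^ j * a) powr (real DIM('a) - 1)))"
      unfolding c_def by (simp add: ennreal_mult)
    also have "c j * (12 ^ DIM('a) * (2 ^ j * a) powr (real DIM('a) - 1))
        = 2 powr P * 12 ^ DIM('a) * a powr e * \<rho> ^ j"
    proof -
      have "(2 ^ j * a) powr (- P) * (2 ^ j * a) powr (real DIM('a) - 1) = (2 ^ j * a) powr e"
        unfolding e_def by (simp add: powr_add[symmetric])
      also have "\<dots> = (2 ^ j) powr e * a powr e" using a0 by (simp add: powr_mult)
      also have "(2::real) ^ j = 2 powr (real j)" by (simp add: powr_realpow)
      also have "(2 powr (real j)) powr e = \<rho> ^ j" unfolding \<rho>_def
        by (simp add: powr_powr powr_power mult.commute)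
      finally show ?thesis unfolding c_def by (simp add: algebra_simps powr_realpow)
    qed
    finally show ?thesis .
  qed
  have "(\<integral>\<^sup>+x. ennreal (indicator S x * h x powr (- P)) \<partial>lborel)
      \<le> (\<integral>\<^sup>+x. (\<Sum>j. ennreal (c j) * indicator (Cyl (2 ^ j * a)) x) \<partial>lborel)"
    by (intro nn_integral_mono pw)
  also have "\<dots> = (\<Sum>j. \<integral>\<^sup>+x. ennreal (c j) * indicator (Cyl (2 ^ j * a)) x \<partial>lborel)"
    by (rule nn_integral_suminf) (use measC in measurable)
  also have "\<dots> = (\<Sum>j. ennreal (c j) * emeasure lborel (Cyl (2 ^ j * a)))"
    using measC by (simp add: nn_integral_cmult_indicator)
  also have "\<dots> \<le> (\<Sum>j. ennreal (2 powr P * 12 ^ DIM('a) * a powr e * \<rho> ^ j))"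
    by (intro suminf_le summableI termb)
  also have "\<dots> = ennreal (\<Sum>j. 2 powr P * 12 ^ DIM('a) * a powr e * \<rho> ^ j)"
    using \<rho>1 by (intro suminf_ennreal2) (auto intro: summable_mult)
  also have "(\<Sum>j. 2 powr P * 12 ^ DIM('a) * a powr e * \<rho> ^ j) = 2 powr P * 12 ^ DIM('a) * a powr e / (1 - \<rho>)"
    using \<rho>1 by (subst suminf_mult) (auto simp: suminf_geometric)
  finally show ?thesis unfolding S_def h_def \<rho>_def e_def by simp
qed


lemma hyp_dist:
  fixes v v' x :: "'a::euclidean_space"
  assumes v: "norm v \<ge> 2" and v': "norm v' < norm v / 2"
  defines "n \<equiv> (v - v') /\<^sub>R norm (v - v')"
  shows "norm v / 3 \<le> norm (v + (x - (x \<bullet> n) *\<^sub>R n))"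
proof -
  have d0: "0 < norm (v - v')" using v v' by (auto simp: norm_minus_commute)
  have nn: "n \<bullet> n = 1" using d0 unfolding n_def by (simp add: dot_square_norm)
  have nnorm: "norm n = 1" using d0 unfolding n_def by simp
  define y where "y = v + (x - (x \<bullet> n) *\<^sub>R n)"
  have yn: "y \<bullet> n = v \<bullet> n" unfolding y_def by (simp add: inner_diff_left inner_add_left nn)
  have "v \<bullet> v' \<le> norm v * norm v'" using Cauchy_Schwarz_ineq2[of v v'] by linarith
  also have "\<dots> \<le> norm v * (norm v / 2)" using v' v by (intro mult_left_mono) auto
  finally have "norm v * norm v / 2 \<le> v \<bullet> (v - v')"
    by (simp add: inner_diff_right dot_square_norm power2_eq_square)
  moreover have "norm (v - v') \<le> 3 / 2 * norm v" using norm_triangle_ineq4[of v v'] v' by linarith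
  ultimately have "norm v / 3 * norm (v - v') \<le> v \<bullet> (v - v')"
  proof -
    have "norm v / 3 * norm (v - v') \<le> norm v / 3 * (3 / 2 * norm v)"
      using \<open>norm (v - v') \<le> 3 / 2 * norm v\<close> by (intro mult_left_mono) auto
    then show ?thesis using \<open>norm v * norm v / 2 \<le> v \<bullet> (v - v')\<close> by simp
  qed
  then have "norm v / 3 \<le> v \<bullet> (v - v') / norm (v - v')" using d0 by (simp add: field_simps)
  also have "\<dots> = v \<bullet> n" unfolding n_def by (simp add: inner_commute divide_inverse)
  also have "\<dots> \<le> norm y" using Cauchy_Schwarz_ineq2[of y n] nnorm yn by simp
  finally show ?thesis unfolding y_def .
qed

lemma cos_theta_bound: "cos_theta v v' w \<in> {-1..1}"
proof -
  define A where "A = v - (v' + w - v)"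
  define B where "B = v' - w"
  have "\<bar>A \<bullet> B\<bar> \<le> norm A * norm B" by (rule Cauchy_Schwarz_ineq2)
  have "\<bar>(A \<bullet> B) / (norm A * norm B)\<bar> \<le> 1"
  proof (cases "norm A * norm B = 0")
    case True then show ?thesis by (simp only: division_ring_divide_zero abs_zero)
  next
    case False
    then have p: "0 < norm A * norm B" by (simp add: less_le)
    have "\<bar>(A \<bullet> B) / (norm A * norm B)\<bar> = \<bar>A \<bullet> B\<bar> / (norm A * norm B)"
      using p by (simp add: abs_divide)
    also have "\<dots> \<le> 1" using p \<open>\<bar>A \<bullet> B\<bar> \<le> norm A * norm B\<close> by (simp add: divide_le_eq_1_pos)
    finally show ?thesis .
  qed
  then have "(A \<bullet> B) / (norm A * norm B) \<in> {-1..1}" by (metis abs_le_D1 abs_le_D2 atLeastAtMost_iff minus_le_iff)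
  then show ?thesis unfolding cos_theta_def Let_def A_def B_def .
qed


lemma gq_le:
  fixes w :: "'a::real_normed_vector"
  assumes "0 < N" "0 \<le> q" "w \<noteq> 0"
  shows "gq N q w \<le> N * norm w powr (- q)"
proof (cases "norm w \<le> 1")
  case True
  have "norm w powr q \<le> 1" using True assms by (intro powr_le1) auto
  moreover have "0 < norm w powr q" using assms by simp
  ultimately have "1 \<le> norm w powr (- q)" by (simp add: powr_minus field_simps)
  then show ?thesis using True assms unfolding gq_def by simp
next
  case False then show ?thesis unfolding gq_def by simp
qed

lemma hyper_bound:
  fixes v v' :: "'a::euclidean_space" and f :: "'a \<Rightarrow> real" and b :: "real \<Rightarrow> real"
  assumes v: "norm v \<ge> 2" and v': "norm v' < norm v / 2"
    and f0: "\<And>w. 0 \<le> f w" and fg: "\<And>w. f w \<le> gq N q w" and N: "0 < N"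
    and b: "\<And>x. x \<in> {-1..1} \<Longrightarrow> b0 \<le> b x \<and> b x \<le> b1" and b0: "0 < b0"
    and t: "0 \<le> \<gamma> + 2 * s" and q: "q > real DIM('a) + \<gamma> + 2 * s"
  defines "F \<equiv> (\<lambda>v's. if c1 q * norm v \<le> norm v's
                 then f v's * norm (v - v's) powr (\<gamma> + 2 * s + 1) * b (cos_theta v v' v's)
                 else 0)"
  shows "0 \<le> hyperplane_integral v (v - v') F \<and>
         hyperplane_integral v (v - v') F \<le> b1 * 4 powr (\<gamma> + 2 * s + 1) * N *
           (2 powr (q - \<gamma> - 2 * s - 1) * 12 ^ DIM('a) * (norm v / 3) powr (real DIM('a) - 1 - (q - \<gamma> - 2 * s - 1))
              / (1 - 2 powr (real DIM('a) - 1 - (q - \<gamma> - 2 * s - 1))))"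
proof -
  define n where "n = (v - v') /\<^sub>R norm (v - v')"
  define P where "P = q - \<gamma> - 2 * s - 1"
  define t1 where "t1 = \<gamma> + 2 * s + 1"
  define Cst where "Cst = b1 * 4 powr t1 * N"
  define h where "h x = norm (v + (x - (x \<bullet> n) *\<^sub>R n))" for x
  define S where "S = {x. 0 \<le> x \<bullet> n \<and> x \<bullet> n \<le> 1}"
  define Bd where "Bd = 2 powr P * 12 ^ DIM('a) * (norm v / 3) powr (real DIM('a) - 1 - P) / (1 - 2 powr (real DIM('a) - 1 - P))"
  have d0: "0 < norm (v - v')" using v v' by (auto simp: norm_minus_commute)
  have nnorm: "norm n = 1" using d0 unfolding n_def by simp
  have hd: "norm v / 3 \<le> h x" for x unfolding h_def n_def using hyp_dist[OF v v'] by blast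
  have "1 \<le> real DIM('a)" using DIM_positive[where 'a='a] by linarith
  then have qpos: "0 \<le> q" and P: "P > real DIM('a) - 1" using q t unfolding P_def by linarith+
  have b1: "0 < b1" using b[of 0] b0 by auto
  have Cst0: "0 \<le> Cst" unfolding Cst_def using b1 N by simp
  have bc: "b0 \<le> b (cos_theta v v' w) \<and> b (cos_theta v v' w) \<le> b1" for w
    using b[OF cos_theta_bound] .
  have Fnn: "0 \<le> F w" for w
    unfolding F_def using f0[of w] bc[of w] b0 by auto
  have Fle: "F w \<le> Cst * norm w powr (- P)" if w: "norm v / 3 \<le> norm w" for w
  proof -
    have nw: "0 < norm w" using w v by linarith
    have fw: "f w \<le> N * norm w powr (- q)" using fg[of w] gq_le[OF N qpos, of w] nw by force
    have "norm (v - w) \<le> 4 * norm w" using norm_triangle_ineq4[of v w] w by linarith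
    then have nvw: "norm (v - w) powr t1 \<le> 4 powr t1 * norm w powr t1"
      using t unfolding t1_def by (subst powr_mult[symmetric]) (auto intro: powr_mono2)
    have bw: "0 \<le> b (cos_theta v v' w)" "b (cos_theta v v' w) \<le> b1" using bc[of w] b0 by auto
    have pw: "0 \<le> f w * norm (v - w) powr t1 * b (cos_theta v v' w)"
      using f0[of w] bw(1) by simp
    have "F w \<le> f w * norm (v - w) powr t1 * b (cos_theta v v' w)"
    proof (cases "c1 q * norm v \<le> norm w")
      case True then show ?thesis unfolding F_def t1_def by simp
    next
      case False then show ?thesis unfolding F_def using pw by simp
    qed
    also have "\<dots> \<le> (N * norm w powr (- q)) * (4 powr t1 * norm w powr t1) * b1"
    proof -
      have i1: "f w * norm (v - w) powr t1 \<le> (N * norm w powr (- q)) * (4 powr t1 * norm w powr t1)"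
        by (rule mult_mono[OF fw nvw]) (use N in simp_all)
      have i2: "0 \<le> (N * norm w powr (- q)) * (4 powr t1 * norm w powr t1)" using N by simp
      show ?thesis by (rule mult_mono[OF i1 bw(2) i2 bw(1)])
    qed
    also have "\<dots> = Cst * (norm w powr (- q) * norm w powr t1)" unfolding Cst_def by simp
    also have "norm w powr (- q) * norm w powr t1 = norm w powr (- P)"
    proof -
      have "- q + t1 = - P" unfolding P_def t1_def by simp
      then show ?thesis by (simp add: powr_add[symmetric])
    qed
    finally show ?thesis .
  qed
  have HI: "hyperplane_integral v (v - v') F = integral\<^sup>L lborel (\<lambda>x. indicator S x *\<^sub>R F (v + (x - (x \<bullet> n) *\<^sub>R n)))"
    unfolding hyperplane_integral_def Let_def n_def S_def set_lebesgue_integral_def by simp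
  have nonneg: "0 \<le> hyperplane_integral v (v - v') F"
    unfolding HI by (rule integral_nonneg_AE, rule AE_I2) (simp add: Fnn)
  have "hyperplane_integral v (v - v') F \<le> Cst * Bd"
    unfolding HI
  proof (rule integral_le_nn_bound)
    show "indicator S x *\<^sub>R F (v + (x - (x \<bullet> n) *\<^sub>R n)) \<le> Cst * (indicator S x * h x powr (- P))" for x
      using Fle[OF hd[of x, unfolded h_def]] unfolding h_def by (simp add: indicator_def)
    show "0 \<le> Cst * (indicator S x * h x powr (- P))" for x using Cst0 by simp
    have Bd0: "0 \<le> Bd"
    proof -
      have "2 powr (real DIM('a) - 1 - P) < 1" using P by (intro powr_less_one) auto
      then show ?thesis unfolding Bd_def by simp
    qed
    then show "0 \<le> Cst * Bd" using Cst0 by simp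
    have meas: "(\<lambda>x. ennreal (indicator S x * h x powr (- P))) \<in> borel_measurable lborel"
      unfolding S_def h_def by measurable
    have "(\<integral>\<^sup>+x. ennreal (Cst * (indicator S x * h x powr (- P))) \<partial>lborel)
        = ennreal Cst * (\<integral>\<^sup>+x. ennreal (indicator S x * h x powr (- P)) \<partial>lborel)"
    proof -
      have "ennreal (Cst * (indicator S x * h x powr (- P))) = ennreal Cst * ennreal (indicator S x * h x powr (- P))" for x
        using Cst0 by (intro ennreal_mult) auto
      then show ?thesis by (simp only: nn_integral_cmult[OF meas])
    qed
    also have "\<dots> \<le> ennreal Cst * ennreal Bd"
      unfolding Bd_def S_def h_def
      by (intro mult_left_mono slab_nn_bound[OF nnorm _ _ P]) (use v hd[unfolded h_def] in auto)
    also have "\<dots> = ennreal (Cst * Bd)" using Cst0 Bd0 by (simp add: ennreal_mult)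
    finally show "(\<integral>\<^sup>+x. ennreal (Cst * (indicator S x * h x powr (- P))) \<partial>lborel) \<le> ennreal (Cst * Bd)" .
  qed
  then show ?thesis using nonneg unfolding Cst_def Bd_def P_def t1_def by blast
qed



lemma inv_one_minus_bound:
  fixes \<epsilon> :: real assumes e: "0 < \<epsilon>"
  shows "1 / (1 - 2 powr (- \<epsilon>)) \<le> 1 + 2 / \<epsilon>"
proof -
  define y where "y = \<epsilon> * ln 2"
  have l2: "2/3 \<le> ln (2::real)" by (rule ln2_ge_two_thirds)
  have y0: "0 < y" unfolding y_def using e l2 by simp
  have pw: "2 powr (- \<epsilon>) = exp (- y)" unfolding y_def powr_def by simp
  have "1 + y \<le> exp y" by (rule exp_ge_add_one_self)
  then have "exp (- y) \<le> 1 / (1 + y)" using y0 by (simp add: exp_minus field_simps)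
  then have den: "y / (1 + y) \<le> 1 - exp (- y)" using y0 by (simp add: field_simps)
  have dpos: "0 < y / (1 + y)" using y0 by simp
  have "1 / (1 - exp (- y)) \<le> 1 / (y / (1 + y))"
  proof (rule divide_left_mono[OF den])
    have "0 < 1 - exp (- y)" using den dpos by linarith
    then show "0 < (1 - exp (- y)) * (y / (1 + y))" using dpos by (rule mult_pos_pos)
  qed simp
  also have "\<dots> = 1 + 1 / y" using y0 by (simp add: field_simps)
  also have "1 / y \<le> 2 / \<epsilon>"
  proof -
    have "\<epsilon> \<le> 2 * y" unfolding y_def using l2 e by (simp add: algebra_simps)
    then show ?thesis using y0 e by (simp add: field_simps)
  qed
  finally show ?thesis unfolding pw by simp
qed

lemma six_pow_bound:
  fixes D q :: real assumes D: "2 \<le> D" and q: "D < q"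
  shows "6 powr q \<le> 6 powr (2 * D + 35) * (1 + q) powr (q - (D - 1))"
proof (cases "q \<le> 2 * D + 35")
  case True
  have "6 powr q \<le> 6 powr (2 * D + 35)" using True by simp
  moreover have "1 \<le> (1 + q) powr (q - (D - 1))" using q D by (intro ge_one_powr_ge_zero) auto
  moreover have "6 powr (2 * D + 35) * 1 \<le> 6 powr (2 * D + 35) * (1 + q) powr (q - (D - 1))"
    using \<open>1 \<le> (1 + q) powr (q - (D - 1))\<close> by (intro mult_left_mono) auto
  ultimately show ?thesis by linarith
next
  case False
  have six: "6 \<le> sqrt (1 + q)" using False D by (intro real_le_rsqrt) auto
  have "6 powr q \<le> (sqrt (1 + q)) powr q" using six False D by (intro powr_mono2) auto
  also have "sqrt (1 + q) = (1 + q) powr (1/2)" using False D by (simp add: powr_half_sqrt)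
  also have "((1 + q) powr (1/2)) powr q = (1 + q) powr (q / 2)" by (simp add: powr_powr)
  also have "\<dots> \<le> (1 + q) powr (q - (D - 1))" using False D by (intro powr_mono) auto
  also have "\<dots> \<le> 6 powr (2 * D + 35) * (1 + q) powr (q - (D - 1))"
  proof -
    have "1 \<le> 6 powr (2 * D + 35)" using D by (intro ge_one_powr_ge_zero) auto
    then have "1 * (1 + q) powr (q - (D - 1)) \<le> 6 powr (2 * D + 35) * (1 + q) powr (q - (D - 1))"
      by (intro mult_right_mono) auto
    then show ?thesis by simp
  qed
  finally show ?thesis .
qed

lemma numeric_bound:
  fixes D t q :: real
  assumes D: "2 \<le> D" and t: "0 \<le> t" "t \<le> 2" and q: "D + t < q"
  shows "2 powr (q - t - 1) * 3 powr (q - D - t) / (1 - 2 powr (D + t - q))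
         \<le> 3 * 6 powr (2 * D + 38) * ((1 + q) powr (q - (D - 1)) + 1 / (q - (D + t)))"
proof -
  define \<epsilon> where "\<epsilon> = q - D - t"
  have e0: "0 < \<epsilon>" unfolding \<epsilon>_def using q by simp
  define Z where "Z = (1 + q) powr (q - (D - 1))"
  have Z0: "0 \<le> Z" unfolding Z_def by simp
  have A: "2 powr (q - t - 1) * 3 powr (q - D - t) \<le> 6 powr q"
  proof -
    have "2 powr (q - t - 1) \<le> 2 powr q" using t by (intro powr_mono) auto
    moreover have "3 powr (q - D - t) \<le> 3 powr q" using t D by (intro powr_mono) auto
    ultimately have "2 powr (q - t - 1) * 3 powr (q - D - t) \<le> 2 powr q * 3 powr q"
      by (intro mult_mono) auto
    also have "\<dots> = 6 powr q" by (simp add: powr_mult[symmetric])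
    finally show ?thesis .
  qed
  have den: "0 < 1 - 2 powr (D + t - q)" using q by (simp add: powr_less_one)
  have B: "1 / (1 - 2 powr (D + t - q)) \<le> 1 + 2 / \<epsilon>"
    using inv_one_minus_bound[OF e0] unfolding \<epsilon>_def by (simp add: algebra_simps)
  have "2 powr (q - t - 1) * 3 powr (q - D - t) / (1 - 2 powr (D + t - q))
      = (2 powr (q - t - 1) * 3 powr (q - D - t)) * (1 / (1 - 2 powr (D + t - q)))" by simp
  also have "\<dots> \<le> 6 powr q * (1 + 2 / \<epsilon>)"
    using A B den by (intro mult_mono) auto
  also have "\<dots> \<le> 3 * 6 powr (2 * D + 38) * (Z + 1 / \<epsilon>)"
  proof (cases "\<epsilon> \<le> 1")
    case True
    have "q \<le> 2 * D + 38" using True t D unfolding \<epsilon>_def by linarith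
    then have "6 powr q \<le> 6 powr (2 * D + 38)" by simp
    moreover have "1 + 2 / \<epsilon> \<le> 3 / \<epsilon>" using True e0 by (simp add: field_simps)
    ultimately have "6 powr q * (1 + 2 / \<epsilon>) \<le> 6 powr (2 * D + 38) * (3 / \<epsilon>)"
      using e0 by (intro mult_mono) auto
    also have "\<dots> \<le> 3 * 6 powr (2 * D + 38) * (Z + 1 / \<epsilon>)"
      using Z0 e0 by (simp add: field_simps)
    finally show ?thesis .
  next
    case False
    have "1 + 2 / \<epsilon> \<le> 3" using False by (simp add: field_simps)
    moreover have "6 powr q \<le> 6 powr (2 * D + 35) * Z"
      unfolding Z_def using D q t by (intro six_pow_bound) auto
    moreover have "6 powr (2 * D + 35) \<le> 6 powr (2 * D + 38)" by simp
    ultimately have "6 powr q \<le> 6 powr (2 * D + 38) * Z"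
      using Z0 by (meson mult_right_mono order_trans)
    then have "6 powr q * (1 + 2 / \<epsilon>) \<le> (6 powr (2 * D + 38) * Z) * 3"
      using \<open>1 + 2 / \<epsilon> \<le> 3\<close> e0 Z0 by (intro mult_mono) auto
    also have "\<dots> \<le> 3 * 6 powr (2 * D + 38) * (Z + 1 / \<epsilon>)"
      using Z0 e0 by (simp add: field_simps)
    finally show ?thesis .
  qed
  finally show ?thesis unfolding Z_def \<epsilon>_def by (simp add: algebra_simps)
qed


lemma alg_powr:
  fixes x e a \<gamma> q :: real
  assumes x: "0 < x" and ea: "e - a - 2 = \<gamma> - 2 - q"
  shows "(x / 3) powr e * (x / 2) powr (- a) * (2 * (1 + q) / x)\<^sup>2
       = 3 powr (- e) * 2 powr a * 4 * (1 + q)\<^sup>2 * (x powr (\<gamma> - 2) * x powr (- q))"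
proof -
  have f1: "(x / 3) powr e = x powr e * 3 powr (- e)"
  proof -
    have "(x / 3) powr e = x powr e / 3 powr e" using x by (simp add: powr_divide)
    also have "\<dots> = x powr e * 3 powr (- e)" by (simp add: powr_minus_divide)
    finally show ?thesis .
  qed
  have f2: "(x / 2) powr (- a) = x powr (- a) * 2 powr a"
  proof -
    have "(x / 2) powr (- a) = x powr (- a) / 2 powr (- a)" using x by (simp add: powr_divide)
    also have "\<dots> = x powr (- a) * 2 powr a" by (simp add: powr_minus_divide)
    finally show ?thesis .
  qed
  have f3: "(2 * (1 + q) / x)\<^sup>2 = 4 * (1 + q)\<^sup>2 * x powr (- 2)"
  proof -
    have "x powr (- 2) = inverse (x ^ 2)" using x by (simp add: powr_minus powr_numeral)
    have "(2 * (1 + q) / x)\<^sup>2 = (2 * (1 + q))\<^sup>2 / x\<^sup>2" by (rule power_divide)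
    also have "(2 * (1 + q))\<^sup>2 = 4 * (1 + q)\<^sup>2" by (subst power_mult_distrib) simp
    finally show ?thesis using \<open>x powr (- 2) = inverse (x ^ 2)\<close> by (simp add: divide_inverse)
  qed
  have f4: "x powr e * x powr (- a) * x powr (- 2) = x powr (\<gamma> - 2) * x powr (- q)"
  proof -
    have "x powr e * x powr (- a) * x powr (- 2) = x powr (e - a - 2)" by (simp add: powr_add[symmetric])
    also have "\<dots> = x powr (\<gamma> - 2 - q)" using ea by (simp only:)
    also have "\<dots> = x powr (\<gamma> - 2) * x powr (- q)" by (simp add: powr_add[symmetric])
    finally show ?thesis .
  qed
  have "(x / 3) powr e * (x / 2) powr (- a) * (2 * (1 + q) / x)\<^sup>2
      = (3 powr (- e) * 2 powr a * 4 * (1 + q)\<^sup>2) * (x powr e * x powr (- a) * x powr (- 2))"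
    unfolding f1 f2 f3 by (simp add: mult_ac)
  also have "\<dots> = 3 powr (- e) * 2 powr a * 4 * (1 + q)\<^sup>2 * (x powr (\<gamma> - 2) * x powr (- q))"
    unfolding f4 ..
  finally show ?thesis .
qed

lemma alg_rearrange:
  fixes b1 c4 N p2 c12 L d M Y E R c3 c2a qq xg xq :: real
  assumes "L * M * Y = c3 * c2a * 4 * qq * (xg * xq)"
  shows "b1 * c4 * N * (p2 * c12 * L / d) * M * Y * E
       = (b1 * c4 * c12 * c2a * 4) * E * (p2 * c3 / d) * (qq * xg * (N * xq))"
proof -
  have "b1 * c4 * N * (p2 * c12 * L / d) * M * Y * E = (b1 * c4 * N * p2 * c12 * E * inverse d) * (L * M * Y)"
    by (simp add: divide_inverse mult_ac)
  also have "\<dots> = (b1 * c4 * N * p2 * c12 * E * inverse d) * (c3 * c2a * 4 * qq * (xg * xq))"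
    unfolding assms ..
  also have "\<dots> = (b1 * c4 * c12 * c2a * 4) * E * (p2 * c3 / d) * (qq * xg * (N * xq))"
    by (simp add: divide_inverse mult_ac)
  finally show ?thesis .
qed


lemma B3_bound:
  fixes v :: "'a::euclidean_space" and f :: "'a \<Rightarrow> real" and b :: "real \<Rightarrow> real"
  assumes v: "norm v \<ge> 2" and f0: "\<And>w. 0 \<le> f w" and fg: "\<And>w. f w \<le> gq N q w" and N: "0 < N"
    and b: "\<And>x. x \<in> {-1..1} \<Longrightarrow> b0 \<le> b x \<and> b x \<le> b1" and b0: "0 < b0"
    and t: "0 \<le> \<gamma> + 2 * s" and s0: "0 < s" and q: "q > real DIM('a) + \<gamma> + 2 * s"
    and fint: "integrable lborel (\<lambda>v. f v * (norm v)\<^sup>2)"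
    and E: "(\<integral>v. f v * (norm v)\<^sup>2 \<partial>lborel) \<le> E0"
  shows "B3 \<gamma> s b q f f v \<le> (b1 * 4 powr (\<gamma> + 2 * s + 1) * N *
           (2 powr (q - \<gamma> - 2 * s - 1) * 12 ^ DIM('a) * (norm v / 3) powr (real DIM('a) - 1 - (q - \<gamma> - 2 * s - 1))
              / (1 - 2 powr (real DIM('a) - 1 - (q - \<gamma> - 2 * s - 1)))))
         * (norm v / 2) powr (- (real DIM('a) + 2 * s)) * (2 * (1 + q) / norm v)\<^sup>2 * E0"
proof -
  define Kh where "Kh = b1 * 4 powr (\<gamma> + 2 * s + 1) * N *
           (2 powr (q - \<gamma> - 2 * s - 1) * 12 ^ DIM('a) * (norm v / 3) powr (real DIM('a) - 1 - (q - \<gamma> - 2 * s - 1))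
              / (1 - 2 powr (real DIM('a) - 1 - (q - \<gamma> - 2 * s - 1))))"
  define X where "X = (norm v / 2) powr (- (real DIM('a) + 2 * s))"
  define Y where "Y = (2 * (1 + q) / norm v)\<^sup>2"
  define Mo where "Mo = Kh * X * Y"
  define A where "A = {v'::'a. c3 q * norm v \<le> norm v' \<and> norm v' < norm v / 2}"
  define HI where "HI v' = hyperplane_integral v (v - v')
          (\<lambda>v's. if c1 q * norm v \<le> norm v's
                 then f v's * norm (v - v's) powr (\<gamma> + 2 * s + 1) * b (cos_theta v v' v's)
                 else 0)" for v'
  have "1 \<le> real DIM('a)" using DIM_positive[where 'a='a] by linarith
  then have qpos: "0 < q" using q t by linarith
  have nv: "0 < norm v" using v by linarith
  have hb: "0 \<le> HI v' \<and> HI v' \<le> Kh" if "norm v' < norm v / 2" for v'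
    unfolding HI_def Kh_def by (rule hyper_bound[OF v that f0 fg N b b0 t q])
  have "0 \<le> HI 0 \<and> HI 0 \<le> Kh" using nv by (intro hb) simp
  then have Kh0: "0 \<le> Kh" by linarith
  have X0: "0 \<le> X" unfolding X_def by simp
  have Y0: "0 \<le> Y" unfolding Y_def by simp
  have Mo0: "0 \<le> Mo" unfolding Mo_def using Kh0 X0 Y0 by simp
  have E0: "0 \<le> E0"
  proof -
    have "0 \<le> (\<integral>v. f v * (norm v)\<^sup>2 \<partial>lborel)" by (rule integral_nonneg_AE, rule AE_I2) (simp add: f0)
    then show ?thesis using E by linarith
  qed
  have B3eq: "B3 \<gamma> s b q f f v = integral\<^sup>L lborel (\<lambda>v'. indicator A v' *\<^sub>R
      ((f v' - f v) / norm (v' - v) powr (real DIM('a) + 2 * s) * HI v'))"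
    unfolding B3_def set_lebesgue_integral_def A_def HI_def by simp
  have "B3 \<gamma> s b q f f v \<le> Mo * E0"
    unfolding B3eq
  proof (rule integral_le_nn_bound)
    show "0 \<le> Mo * (f x * (norm x)\<^sup>2)" for x using Mo0 f0[of x] by simp
    show "0 \<le> Mo * E0" using Mo0 E0 by simp
    show "indicator A x *\<^sub>R ((f x - f v) / norm (x - v) powr (real DIM('a) + 2 * s) * HI x)
          \<le> Mo * (f x * (norm x)\<^sup>2)" for x
    proof (cases "x \<in> A")
      case False then show ?thesis using Mo0 f0[of x] by simp
    next
      case True
      then have x1: "c3 q * norm v \<le> norm x" and x2: "norm x < norm v / 2" unfolding A_def by auto
      have hx: "0 \<le> HI x" "HI x \<le> Kh" using hb[OF x2] by auto
      have dd: "norm v / 2 \<le> norm (x - v)" using norm_triangle_ineq2[of v x] x2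
        by (simp add: norm_minus_commute)
      have ddpos: "0 < norm (x - v)" using dd nv by linarith
      define e where "e = real DIM('a) + 2 * s"
      have "(f x - f v) / norm (x - v) powr e * HI x \<le> f x / norm (x - v) powr e * HI x"
        using f0[of v] hx(1) ddpos by (intro mult_right_mono divide_right_mono) auto
      also have "f x / norm (x - v) powr e = f x * norm (x - v) powr (- e)"
        by (simp add: powr_minus divide_inverse)
      also have "norm (x - v) powr (- e) \<le> X"
        unfolding X_def e_def[symmetric] using dd nv s0 \<open>1 \<le> real DIM('a)\<close>
        by (intro powr_mono2') (auto simp: e_def)
      then have "f x * norm (x - v) powr (- e) * HI x \<le> f x * X * Kh"
        using f0[of x] hx X0 by (intro mult_mono mult_left_mono) auto
      also have "f x \<le> f x * (norm x)\<^sup>2 * Y"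
      proof -
        have "c3 q * norm v = norm v / (2 * (1 + q))" unfolding c3_def by simp
        then have "norm v / (2 * (1 + q)) \<le> norm x" using x1 by simp
        then have "norm v \<le> norm x * (2 * (1 + q))" using qpos by (simp add: pos_divide_le_eq)
        then have "1 \<le> norm x * (2 * (1 + q)) / norm v" using nv by (simp add: le_divide_eq)
        then have "1 \<le> norm x * (2 * (1 + q) / norm v)" by simp
        then have "1 \<le> (norm x * (2 * (1 + q) / norm v))\<^sup>2" by (simp add: one_le_power)
        then have "f x * 1 \<le> f x * (norm x * (2 * (1 + q) / norm v))\<^sup>2" using f0[of x] by (intro mult_left_mono) auto
        moreover have "(norm x * (2 * (1 + q) / norm v))\<^sup>2 = (norm x)\<^sup>2 * (2 * (1 + q) / norm v)\<^sup>2"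
          by (rule power_mult_distrib)
        ultimately show ?thesis unfolding Y_def by (simp add: mult.assoc)
      qed
      then have "f x * X * Kh \<le> f x * (norm x)\<^sup>2 * Y * X * Kh"
        using X0 Kh0 by (intro mult_right_mono) auto
      also have "\<dots> = Mo * (f x * (norm x)\<^sup>2)" unfolding Mo_def by (simp add: ac_simps)
      finally show ?thesis using True unfolding e_def by simp
    qed
    have meas: "(\<lambda>x. ennreal (f x * (norm x)\<^sup>2)) \<in> borel_measurable lborel"
      using borel_measurable_integrable[OF fint] by measurable
    have "(\<integral>\<^sup>+x. ennreal (Mo * (f x * (norm x)\<^sup>2)) \<partial>lborel)
        = ennreal Mo * (\<integral>\<^sup>+x. ennreal (f x * (norm x)\<^sup>2) \<partial>lborel)"
    proof -
      have "ennreal (Mo * (f x * (norm x)\<^sup>2)) = ennreal Mo * ennreal (f x * (norm x)\<^sup>2)" for x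
        using Mo0 f0[of x] by (intro ennreal_mult) auto
      then show ?thesis by (simp only: nn_integral_cmult[OF meas])
    qed
    also have "(\<integral>\<^sup>+x. ennreal (f x * (norm x)\<^sup>2) \<partial>lborel) = ennreal (\<integral>x. f x * (norm x)\<^sup>2 \<partial>lborel)"
      by (rule nn_integral_eq_integral[OF fint]) (simp add: f0)
    also have "ennreal Mo * \<dots> \<le> ennreal Mo * ennreal E0"
      using E by (intro mult_left_mono ennreal_leI) auto
    also have "\<dots> = ennreal (Mo * E0)" using Mo0 E0 by (simp add: ennreal_mult)
    finally show "(\<integral>\<^sup>+x. ennreal (Mo * (f x * (norm x)\<^sup>2)) \<partial>lborel) \<le> ennreal (Mo * E0)" .
  qed
  then show ?thesis unfolding Mo_def Kh_def X_def Y_def .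
qed


theorem proposition3p9:
  fixes \<gamma> s b0 b1 m0 M0 E0 H0 :: real
  assumes "DIM('a::euclidean_space) \<ge> 2"
    and "0 < s" and "s < 1"
    and "0 \<le> \<gamma> + 2 * s" and "\<gamma> + 2 * s \<le> 2"
    and "0 < b0" and "b0 \<le> b1"
    and "0 < m0"
  shows "\<exists>C>0. \<forall>(b :: real \<Rightarrow> real) (f :: 'a \<Rightarrow> real) (q :: real) (N :: real) (v :: 'a).
           smooth_on_interval b \<and> (\<forall>x\<in>{-1..1}. b0 \<le> b x \<and> b x \<le> b1) \<and>
           hydro_bounds m0 M0 E0 H0 f \<and>
           q > real DIM('a) + \<gamma> + 2 * s \<and> N > 0 \<and> (\<forall>w. f w \<le> gq N q w) \<and>
           norm v \<ge> 2
           \<longrightarrow> B3 \<gamma> s b q f f v \<le>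
               C * (1 + q)\<^sup>2 * ((1 + q) powr (q - (real DIM('a) - 1))
                               + 1 / (q - (real DIM('a) + \<gamma> + 2 * s)))
                 * norm v powr (\<gamma> - 2) * gq N q v"
  proof -
  define D where "D = real DIM('a)"
  define C2 where "C2 = 3 * 6 powr (2 * D + 38)"
  define K0 where "K0 = b1 * 4 powr (\<gamma> + 2 * s + 1) * 12 ^ DIM('a) * 2 powr (D + 2 * s) * 4"
  define C where "C = K0 * (\<bar>E0\<bar> + 1) * C2"
  have b1pos: "0 < b1" using assms by linarith
  have K0pos: "0 < K0" unfolding K0_def using b1pos by simp
  have C2pos: "0 < C2" unfolding C2_def by simp
  have Cpos: "0 < C" unfolding C_def using K0pos C2pos by (simp add: add_pos_nonneg)
  have D2: "2 \<le> D" unfolding D_def using assms(1) by simp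
  show ?thesis
  proof (intro exI[of _ C] conjI allI impI)
    show "0 < C" by (rule Cpos)
    fix b :: "real \<Rightarrow> real" and f :: "'a \<Rightarrow> real" and q N :: real and v :: 'a
    assume H: "smooth_on_interval b \<and> (\<forall>x\<in>{-1..1}. b0 \<le> b x \<and> b x \<le> b1) \<and>
           hydro_bounds m0 M0 E0 H0 f \<and>
           q > real DIM('a) + \<gamma> + 2 * s \<and> N > 0 \<and> (\<forall>w. f w \<le> gq N q w) \<and>
           norm v \<ge> 2"
    then have bb: "\<And>x. x \<in> {-1..1} \<Longrightarrow> b0 \<le> b x \<and> b x \<le> b1"
      and hyd: "hydro_bounds m0 M0 E0 H0 f" and q: "q > real DIM('a) + \<gamma> + 2 * s"
      and N: "N > 0" and fg: "\<And>w. f w \<le> gq N q w" and v: "norm v \<ge> 2" by auto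
    from hyd have f0: "\<And>w. 0 \<le> f w" and fint: "integrable lborel (\<lambda>v. f v * (norm v)\<^sup>2)"
      and E: "(\<integral>v. f v * (norm v)\<^sup>2 \<partial>lborel) \<le> E0"
      unfolding hydro_bounds_def by auto
    have E0: "0 \<le> E0"
    proof -
      have "0 \<le> (\<integral>v. f v * (norm v)\<^sup>2 \<partial>lborel)" by (rule integral_nonneg_AE, rule AE_I2) (simp add: f0)
      then show ?thesis using E by linarith
    qed
    define x where "x = norm v"
    have x0: "0 < x" "2 \<le> x" using v unfolding x_def by auto
    have gqv: "gq N q v = N * x powr (- q)" unfolding gq_def x_def using v by simp
    define e where "e = real DIM('a) - 1 - (q - \<gamma> - 2 * s - 1)"
    define W where "W = 2 powr (q - \<gamma> - 2 * s - 1) * 3 powr (- e) / (1 - 2 powr e)"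
    define Q where "Q = (1 + q)\<^sup>2 * x powr (\<gamma> - 2) * (N * x powr (- q))"
    define Y' where "Y' = (1 + q) powr (q - (real DIM('a) - 1)) + 1 / (q - (real DIM('a) + \<gamma> + 2 * s))"
    have B: "B3 \<gamma> s b q f f v \<le> (b1 * 4 powr (\<gamma> + 2 * s + 1) * N *
           (2 powr (q - \<gamma> - 2 * s - 1) * 12 ^ DIM('a) * (x / 3) powr e / (1 - 2 powr e)))
         * (x / 2) powr (- (D + 2 * s)) * (2 * (1 + q) / x)\<^sup>2 * E0"
      unfolding x_def e_def D_def
      by (rule B3_bound[OF v f0 fg N bb _ _ _ q fint E]) (use assms in auto)
    have alg: "(x / 3) powr e * (x / 2) powr (- (D + 2 * s)) * (2 * (1 + q) / x)\<^sup>2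
       = 3 powr (- e) * 2 powr (D + 2 * s) * 4 * (1 + q)\<^sup>2 * (x powr (\<gamma> - 2) * x powr (- q))"
      by (rule alg_powr[OF x0(1)]) (simp add: e_def D_def)
    have eq: "(b1 * 4 powr (\<gamma> + 2 * s + 1) * N *
           (2 powr (q - \<gamma> - 2 * s - 1) * 12 ^ DIM('a) * (x / 3) powr e / (1 - 2 powr e)))
         * (x / 2) powr (- (D + 2 * s)) * (2 * (1 + q) / x)\<^sup>2 * E0 = K0 * E0 * W * Q"
      unfolding K0_def W_def Q_def by (rule alg_rearrange[OF alg])
    have t: "0 \<le> \<gamma> + 2 * s" "\<gamma> + 2 * s \<le> 2" using assms by auto
    have qD: "D + (\<gamma> + 2 * s) < q" using q unfolding D_def by simp
    have nb: "2 powr (q - (\<gamma> + 2 * s) - 1) * 3 powr (q - D - (\<gamma> + 2 * s)) / (1 - 2 powr (D + (\<gamma> + 2 * s) - q))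
         \<le> 3 * 6 powr (2 * D + 38) * ((1 + q) powr (q - (D - 1)) + 1 / (q - (D + (\<gamma> + 2 * s))))"
      by (rule numeric_bound[OF D2 t qD])
    have ex1: "q - (\<gamma> + 2 * s) - 1 = q - \<gamma> - 2 * s - 1" by simp
    have ex2: "q - D - (\<gamma> + 2 * s) = - e" unfolding e_def D_def by simp
    have ex3: "D + (\<gamma> + 2 * s) - q = e" unfolding e_def D_def by simp
    have ex4: "D + (\<gamma> + 2 * s) = real DIM('a) + \<gamma> + 2 * s" unfolding D_def by simp
    have ex3': "real DIM('a) + \<gamma> + 2 * s - q = e" unfolding e_def by simp
    have WY: "W \<le> C2 * Y'"
      using nb unfolding ex1 ex2 ex4 unfolding ex3' W_def C2_def Y'_def D_def .
    have den: "0 < 1 - 2 powr e"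
    proof -
      have "e < 0" using q unfolding e_def by simp
      then have "2 powr e < 1" by (intro powr_less_one) auto
      then show ?thesis by simp
    qed
    have W0: "0 \<le> W" unfolding W_def using den by simp
    have Q0: "0 \<le> Q" unfolding Q_def using N by simp
    have "E0 * W \<le> (\<bar>E0\<bar> + 1) * (C2 * Y')"
      using E0 W0 WY by (intro mult_mono) auto
    then have "K0 * (E0 * W) \<le> K0 * ((\<bar>E0\<bar> + 1) * (C2 * Y'))"
      using K0pos by (intro mult_left_mono) auto
    then have "K0 * (E0 * W) * Q \<le> K0 * ((\<bar>E0\<bar> + 1) * (C2 * Y')) * Q"
      using Q0 by (intro mult_right_mono) auto
    also have "\<dots> = C * (1 + q)\<^sup>2 * Y' * x powr (\<gamma> - 2) * gq N q v"
      unfolding C_def Q_def gqv by (simp add: mult_ac)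
    finally have fin: "K0 * E0 * W * Q \<le> C * (1 + q)\<^sup>2 * Y' * x powr (\<gamma> - 2) * gq N q v"
      by (simp add: mult_ac)
    show "B3 \<gamma> s b q f f v \<le> C * (1 + q)\<^sup>2 * ((1 + q) powr (q - (real DIM('a) - 1))
                               + 1 / (q - (real DIM('a) + \<gamma> + 2 * s)))
                 * norm v powr (\<gamma> - 2) * gq N q v"
      using B eq fin unfolding Y'_def x_def by linarith
  qed
qed

end
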